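(* Let $d\ge1$ and $n\ge3$ be integers and let $\mathcal{L}$ be the FTCS operator with parameter $r=1/(2d)$, i.e. $(\mathcal{L}v)(\mathbf{k})=\frac{1}{2d}\sum_{i=1}^d\big(v(\mathbf{k}+\mathbf{e}_i)+v(\mathbf{k}-\mathbf{e}_i)\big)$ for $v\in\mathbb{R}^{\mathbb{Z}_n^d}$ (indices mod $n$). Then for every entrywise nonnegative nonzero vector $\mathbf{u}\in\mathbb{R}^{\mathbb{Z}_n^d}$, $$\frac{\|\mathcal{L}\mathbf{u}\|_2^2}{\|\mathbf{u}\|_2^2}\ge\frac{1}{2d}.$$
   Context: This is the FTCS operator $\mathcal{L}=I_n^{\otimes d}+r\sum_j I_n^{\otimes(j-1)}\otimes H\otimes I_n^{\otimes(d-j)}$ ($H$ the $n\times n$ circulant with $-2$ on the diagonal and $1$ on the cyclic off-diagonals) in the case $r=\alpha\Delta t/\Delta x^2=1/(2d)$, i.e. $\Delta t=\Delta x^2/(2d\alpha)$. $\mathbf{e}_i$ is the $i$-th unit vector of $\mathbb{Z}_n^d$. *)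

theory Defs
  imports "HOL-Analysis.Analysis" "HOL-Library.FuncSet"
begin

text \<open>The discrete torus Z_n^d: index vectors k with k i in {0..<n} for i < d
  (coordinates 0..d-1 correspond to the paper's 1..d), extensional outside.\<close>
definition grid :: "nat \<Rightarrow> nat \<Rightarrow> (nat \<Rightarrow> nat) set" where
  "grid d n = PiE {0..<d} (\<lambda>_. {0..<n})"

definition shift_plus :: "nat \<Rightarrow> nat \<Rightarrow> (nat \<Rightarrow> nat) \<Rightarrow> (nat \<Rightarrow> nat)" where
  "shift_plus n i k = k(i := (k i + 1) mod n)"

definition shift_minus :: "nat \<Rightarrow> nat \<Rightarrow> (nat \<Rightarrow> nat) \<Rightarrow> (nat \<Rightarrow> nat)" where
  "shift_minus n i k = k(i := (k i + n - 1) mod n)"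

definition ftcs :: "nat \<Rightarrow> nat \<Rightarrow> ((nat \<Rightarrow> nat) \<Rightarrow> real) \<Rightarrow> ((nat \<Rightarrow> nat) \<Rightarrow> real)" where
  "ftcs d n v = (\<lambda>k. (1 / (2 * real d)) *
      (\<Sum>i<d. v (shift_plus n i k) + v (shift_minus n i k)))"

definition sqnorm :: "nat \<Rightarrow> nat \<Rightarrow> ((nat \<Rightarrow> nat) \<Rightarrow> real) \<Rightarrow> real" where
  "sqnorm d n v = (\<Sum>k\<in>grid d n. (v k)^2)"

end

theory Submission
  imports Defs
begin

lemma sq_sum_ge:
  assumes "finite I" "\<And>i. i \<in> I \<Longrightarrow> (f i::real) \<ge> 0"
  shows "(\<Sum>i\<in>I. (f i)^2) \<le> (\<Sum>i\<in>I. f i)^2"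
  using assms
proof (induction I rule: finite_induct)
  case empty then show ?case by simp
next
  case (insert x F)
  have "0 \<le> sum f F" using insert by (intro sum_nonneg) auto
  moreover have "0 \<le> f x" using insert by auto
  ultimately have "0 \<le> 2 * f x * sum f F" by simp
  then show ?case using insert by (simp add: power2_sum)
qed

lemma mod_aux1: assumes "(a::nat) < n" shows "((a + 1) mod n + n - 1) mod n = a"
proof (cases "a + 1 < n")
  case True
  then have "(a + 1) mod n + n - 1 = a + n" by simp
  then show ?thesis using assms by simp
next
  case False
  from assms have "a + 1 = n" using False by simp
  then show ?thesis by simp
qed

lemma mod_aux2: "(a::nat) < n \<Longrightarrow> ((a + n - 1) mod n + 1) mod n = a"
proof (cases "a = 0")
  case True
  assume "a < n"
  then show ?thesis using True by (cases n) auto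
next
  case False
  assume "a < n"
  then have e: "a + n - 1 = (a - 1) + n" using False by simp
  have "(a + n - 1) mod n = a - 1" unfolding e using \<open>a < n\<close> by simp
  then show ?thesis using False \<open>a < n\<close> by simp
qed

lemma plus_in: "i < d \<Longrightarrow> 0 < n \<Longrightarrow> k \<in> grid d n \<Longrightarrow> shift_plus n i k \<in> grid d n"
  unfolding grid_def shift_plus_def by (auto simp: PiE_iff extensional_def)

lemma minus_in: "i < d \<Longrightarrow> 0 < n \<Longrightarrow> k \<in> grid d n \<Longrightarrow> shift_minus n i k \<in> grid d n"
  unfolding grid_def shift_minus_def by (auto simp: PiE_iff extensional_def)

lemma bij_plus: "i < d \<Longrightarrow> 0 < n \<Longrightarrow> bij_betw (shift_plus n i) (grid d n) (grid d n)"
proof (rule bij_betw_byWitness[where f'="shift_minus n i"])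
  assume "i < d" "0 < n"
  show "\<forall>a\<in>grid d n. shift_minus n i (shift_plus n i a) = a"
  proof
    fix a assume "a \<in> grid d n"
    then have "a i < n" using \<open>i<d\<close> unfolding grid_def by (auto simp: PiE_iff extensional_def)
    then show "shift_minus n i (shift_plus n i a) = a"
      unfolding shift_minus_def shift_plus_def using mod_aux1 by simp
  qed
  show "\<forall>a\<in>grid d n. shift_plus n i (shift_minus n i a) = a"
  proof
    fix a assume "a \<in> grid d n"
    then have "a i < n" using \<open>i<d\<close> unfolding grid_def by (auto simp: PiE_iff extensional_def)
    then show "shift_plus n i (shift_minus n i a) = a"
      unfolding shift_minus_def shift_plus_def using mod_aux2 by simp
  qed
  show "shift_plus n i ` grid d n \<subseteq> grid d n" using plus_in \<open>i<d\<close> \<open>0<n\<close> by auto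
  show "shift_minus n i ` grid d n \<subseteq> grid d n" using minus_in \<open>i<d\<close> \<open>0<n\<close> by auto
qed

lemma bij_minus: "i < d \<Longrightarrow> 0 < n \<Longrightarrow> bij_betw (shift_minus n i) (grid d n) (grid d n)"
proof (rule bij_betw_byWitness[where f'="shift_plus n i"])
  assume "i < d" "0 < n"
  show "\<forall>a\<in>grid d n. shift_plus n i (shift_minus n i a) = a"
  proof
    fix a assume "a \<in> grid d n"
    then have "a i < n" using \<open>i<d\<close> unfolding grid_def by (auto simp: PiE_iff extensional_def)
    then show "shift_plus n i (shift_minus n i a) = a"
      unfolding shift_minus_def shift_plus_def using mod_aux2 by simp
  qed
  show "\<forall>a\<in>grid d n. shift_minus n i (shift_plus n i a) = a"
  proof
    fix a assume "a \<in> grid d n"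
    then have "a i < n" using \<open>i<d\<close> unfolding grid_def by (auto simp: PiE_iff extensional_def)
    then show "shift_minus n i (shift_plus n i a) = a"
      unfolding shift_minus_def shift_plus_def using mod_aux1 by simp
  qed
  show "shift_plus n i ` grid d n \<subseteq> grid d n" using plus_in \<open>i<d\<close> \<open>0<n\<close> by auto
  show "shift_minus n i ` grid d n \<subseteq> grid d n" using minus_in \<open>i<d\<close> \<open>0<n\<close> by auto
qed

lemma finite_grid: "finite (grid d n)"
  unfolding grid_def by (intro finite_PiE) auto

theorem mainTheorem4:
  fixes d n :: nat and u :: "(nat \<Rightarrow> nat) \<Rightarrow> real"
  assumes "d \<ge> 1" and "n \<ge> 3"
    and "\<forall>k\<in>grid d n. u k \<ge> 0"
    and "\<exists>k\<in>grid d n. u k \<noteq> 0"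
  shows "sqnorm d n (ftcs d n u) / sqnorm d n u \<ge> 1 / (2 * real d)"
proof -
  let ?G = "grid d n"
  define c :: real where "c = 1 / (2 * real d)"
  have n0: "0 < n" using assms by simp
  have sp: "(\<Sum>k\<in>?G. (u (shift_plus n i k))^2) = sqnorm d n u" if "i < d" for i
    unfolding sqnorm_def using sum.reindex_bij_betw[OF bij_plus[OF that n0], of "\<lambda>k. (u k)^2"] by simp
  have sm: "(\<Sum>k\<in>?G. (u (shift_minus n i k))^2) = sqnorm d n u" if "i < d" for i
    unfolding sqnorm_def using sum.reindex_bij_betw[OF bij_minus[OF that n0], of "\<lambda>k. (u k)^2"] by simp
  have pt: "c^2 * (\<Sum>i<d. (u (shift_plus n i k))^2 + (u (shift_minus n i k))^2) \<le> (ftcs d n u k)^2"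
    if k: "k \<in> ?G" for k
  proof -
    have nn1: "u (shift_plus n i k) \<ge> 0" "u (shift_minus n i k) \<ge> 0" if "i < d" for i
      using assms(3) plus_in[OF that n0 k] minus_in[OF that n0 k] by auto
    have "(\<Sum>i<d. (u (shift_plus n i k))^2 + (u (shift_minus n i k))^2)
        \<le> (\<Sum>i<d. (u (shift_plus n i k) + u (shift_minus n i k))^2)"
    proof (rule sum_mono)
      fix i assume "i \<in> {..<d}"
      then show "(u (shift_plus n i k))^2 + (u (shift_minus n i k))^2
        \<le> (u (shift_plus n i k) + u (shift_minus n i k))^2"
        using nn1[of i] by (simp add: power2_sum)
    qed
    also have "\<dots> \<le> (\<Sum>i<d. u (shift_plus n i k) + u (shift_minus n i k))^2"
      by (rule sq_sum_ge) (use nn1 in auto)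
    finally have "c^2 * (\<Sum>i<d. (u (shift_plus n i k))^2 + (u (shift_minus n i k))^2)
       \<le> c^2 * (\<Sum>i<d. u (shift_plus n i k) + u (shift_minus n i k))^2"
      by (simp add: mult_left_mono)
    also have "\<dots> = (ftcs d n u k)^2" unfolding ftcs_def c_def by (simp add: power_mult_distrib power_divide)
    finally show ?thesis .
  qed
  have "c^2 * (2 * real d * sqnorm d n u)
      = c^2 * (\<Sum>i<d. (\<Sum>k\<in>?G. (u (shift_plus n i k))^2) + (\<Sum>k\<in>?G. (u (shift_minus n i k))^2))"
    using sp sm by simp
  also have "\<dots> = (\<Sum>k\<in>?G. c^2 * (\<Sum>i<d. (u (shift_plus n i k))^2 + (u (shift_minus n i k))^2))"
  proof -
    have "(\<Sum>i<d. (\<Sum>k\<in>?G. (u (shift_plus n i k))^2) + (\<Sum>k\<in>?G. (u (shift_minus n i k))^2))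
        = (\<Sum>i<d. \<Sum>k\<in>?G. (u (shift_plus n i k))^2 + (u (shift_minus n i k))^2)"
      by (simp only: sum.distrib)
    also have "\<dots> = (\<Sum>k\<in>?G. \<Sum>i<d. (u (shift_plus n i k))^2 + (u (shift_minus n i k))^2)"
      by (rule sum.swap)
    finally show ?thesis by (simp only: sum_distrib_left)
  qed
  also have "\<dots> \<le> sqnorm d n (ftcs d n u)"
    unfolding sqnorm_def by (rule sum_mono) (use pt in auto)
  finally have main: "c * sqnorm d n u \<le> sqnorm d n (ftcs d n u)"
    using assms(1) unfolding c_def by (simp add: power2_eq_square field_simps)
  obtain k0 where k0: "k0 \<in> ?G" "u k0 \<noteq> 0" using assms(4) by auto
  have "0 < sqnorm d n u" unfolding sqnorm_def
    using k0 finite_grid by (intro sum_pos2[of _ k0]) auto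
  then show ?thesis using main unfolding c_def by (simp add: field_simps)
qed

end
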